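(* Let $x$ be a sequence of length $n$, let $i\in\{1,\ldots,n-1\}$, $y=\tau(x,i)$, and let $r,\ell$ be as defined in the context. Let $R=\{i+2,\ldots,i+r-1\}$ and $L=\{i-\ell+1,\ldots,i-1\}$. (1) If $x[i]<x[i+1]$: (a) for every $j\in R$, $\overrightarrow{PD}_y[j]\in\{\overrightarrow{PD}_x[j],\overrightarrow{PD}_x[j]-1\}$; (b) for every $j\in L$, $\overleftarrow{PD}_y[j]\in\{\overleftarrow{PD}_x[j],\overleftarrow{PD}_x[j]+1\}$. (2) If $x[i]>x[i+1]$: (a) for every $j\in R$, $\overrightarrow{PD}_y[j]\in\{\overrightarrow{PD}_x[j],\overrightarrow{PD}_x[j]+1\}$; (b) for every $j\in L$, $\overleftarrow{PD}_y[j]\in\{\overleftarrow{PD}_x[j],\overleftarrow{PD}_x[j]-1\}$.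
   Context: Sequences are finite sequences of pairwise distinct integers indexed from $1$. For $1\le i\le n-1$, $\tau(x,i)$ is obtained from $x$ by exchanging $x[i]$ and $x[i+1]$. The parent-distance table of $x$ is $\overrightarrow{PD}_x[k]=k-\max\{j<k : x[j]<x[k]\}$ if such $j$ exists and $0$ otherwise; the reverse parent-distance table is $\overleftarrow{PD}_x[k]=\min\{j : k<j\le n,\ x[j]<x[k]\}-k$ if such $j$ exists and $0$ otherwise. Notation: $\overrightarrow{a_x}=\overrightarrow{PD}_x[i]$, $\overrightarrow{b_x}=\overrightarrow{PD}_x[i+1]$, $\overleftarrow{a_x}=\overleftarrow{PD}_x[i+1]$, $\overleftarrow{b_x}=\overleftarrow{PD}_x[i]$. Define $r=\overleftarrow{b_x}$ if $x[i]<x[i+1]$ and $\overleftarrow{b_x}>1$; $r=\overleftarrow{a_x}+1$ if $x[i]>x[i+1]$ and $\overleftarrow{a_x}>0$; $r=n-i+1$ otherwise. Define $\ell=\overrightarrow{a_x}$ if $x[i]<x[i+1]$ and $\overrightarrow{a_x}>0$; $\ell=\overrightarrow{b_x}-1$ if $x[i]>x[i+1]$ and $\overrightarrow{b_x}>1$; $\ell=i$ otherwise. Index ranges $\{a,\ldots,b\}$ with $a>b$ are empty. *)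

theory Defs
  imports Main
begin

(* Sequences are lists of pairwise distinct integers, indexed from 1:
   the k-th entry x[k] is  nth1 x k = x ! (k - 1). *)
definition nth1 :: "int list \<Rightarrow> nat \<Rightarrow> int" where
  "nth1 x k = x ! (k - 1)"

definition tau :: "int list \<Rightarrow> nat \<Rightarrow> int list" where
  "tau x i = x[i - 1 := nth1 x (i + 1), i := nth1 x i]"

(* forward parent-distance table PD_x[k] (arrow to the right) *)
definition fpd :: "int list \<Rightarrow> nat \<Rightarrow> nat" where
  "fpd x k = (if \<exists>j. 1 \<le> j \<and> j < k \<and> nth1 x j < nth1 x k
     then k - Max {j. 1 \<le> j \<and> j < k \<and> nth1 x j < nth1 x k} else 0)"

(* reverse parent-distance table (arrow to the left) *)
definition rpd :: "int list \<Rightarrow> nat \<Rightarrow> nat" where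
  "rpd x k = (if \<exists>j. k < j \<and> j \<le> length x \<and> nth1 x j < nth1 x k
     then Min {j. k < j \<and> j \<le> length x \<and> nth1 x j < nth1 x k} - k else 0)"

definition rr :: "int list \<Rightarrow> nat \<Rightarrow> nat" where
  "rr x i = (if nth1 x i < nth1 x (i+1) \<and> rpd x i > 1 then rpd x i
     else if nth1 x i > nth1 x (i+1) \<and> rpd x (i+1) > 0 then rpd x (i+1) + 1
     else length x - i + 1)"

definition ll :: "int list \<Rightarrow> nat \<Rightarrow> nat" where
  "ll x i = (if nth1 x i < nth1 x (i+1) \<and> fpd x i > 0 then fpd x i
     else if nth1 x i > nth1 x (i+1) \<and> fpd x (i+1) > 1 then fpd x (i+1) - 1
     else i)"

end

theory Submission imports Defs begin

lemma ny: "1 \<le> i \<Longrightarrow> i < length x \<Longrightarrow> 1 \<le> k \<Longrightarrow> k \<le> length x \<Longrightarrow>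
  nth1 (tau x i) k = (if k = i then nth1 x (i+1) else if k = i+1 then nth1 x i else nth1 x k)"
  unfolding nth1_def tau_def by (auto simp: nth_list_update)

lemma fpd_eqI: "1\<le>m \<Longrightarrow> m<k \<Longrightarrow> nth1 x m < nth1 x k \<Longrightarrow> (\<forall>j. m<j \<and> j<k \<longrightarrow> \<not> nth1 x j < nth1 x k) \<Longrightarrow> fpd x k = k - m"
proof -
  assume a: "1\<le>m" "m<k" "nth1 x m < nth1 x k" "\<forall>j. m<j \<and> j<k \<longrightarrow> \<not> nth1 x j < nth1 x k"
  have "Max {j. 1 \<le> j \<and> j < k \<and> nth1 x j < nth1 x k} = m"
    apply (rule Max_eqI)
    using a by (auto intro: finite_subset[of _ "{..<k}"] simp: not_le[symmetric])
  thus ?thesis using a unfolding fpd_def by auto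
qed

lemma fpd_eq0I: "(\<forall>j. 1\<le>j \<and> j<k \<longrightarrow> \<not> nth1 x j < nth1 x k) \<Longrightarrow> fpd x k = 0"
  unfolding fpd_def by auto

lemma fpd_char: "(fpd x k = 0 \<and> (\<forall>j. 1\<le>j \<and> j<k \<longrightarrow> \<not> nth1 x j < nth1 x k)) \<or>
  (\<exists>m. 1\<le>m \<and> m<k \<and> nth1 x m < nth1 x k \<and> (\<forall>j. m<j \<and> j<k \<longrightarrow> \<not> nth1 x j < nth1 x k) \<and> fpd x k = k - m)"
proof (cases "\<exists>j. 1 \<le> j \<and> j < k \<and> nth1 x j < nth1 x k")
  case True
  let ?S = "{j. 1 \<le> j \<and> j < k \<and> nth1 x j < nth1 x k}"
  have f: "finite ?S" by (rule finite_subset[of _ "{..<k}"]) auto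
  have ne: "?S \<noteq> {}" using True by auto
  have "Max ?S \<in> ?S" using Max_in[OF f ne] .
  moreover have "\<forall>j. Max ?S<j \<and> j<k \<longrightarrow> \<not> nth1 x j < nth1 x k"
  proof (intro allI impI)
    fix j assume "Max ?S<j \<and> j<k"
    show "\<not> nth1 x j < nth1 x k"
    proof
      assume "nth1 x j < nth1 x k"
      then have "j \<in> ?S" using \<open>Max ?S \<in> ?S\<close> \<open>Max ?S<j \<and> j<k\<close> by auto
      then have "j \<le> Max ?S" by (rule Max_ge[OF f])
      then show False using \<open>Max ?S<j \<and> j<k\<close> by simp
    qed
  qed
  ultimately have M0: "Max ?S \<in> ?S" and H: "\<forall>j. Max ?S<j \<and> j<k \<longrightarrow> \<not> nth1 x j < nth1 x k" by blast+
  from M0 have M: "1 \<le> Max ?S" "Max ?S < k" "nth1 x (Max ?S) < nth1 x k" by (simp_all only: mem_Collect_eq)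
  have E: "fpd x k = k - Max ?S" using M(1) M(2) M(3) H by (rule fpd_eqI)
  show ?thesis
    by (rule disjI2, rule exI[of _ "Max ?S"], intro conjI) (fact M(1), fact M(2), fact M(3), fact H, fact E)
next
  case False
  then have Z: "\<forall>j. 1\<le>j \<and> j<k \<longrightarrow> \<not> nth1 x j < nth1 x k" by blast
  have "fpd x k = 0" using Z by (rule fpd_eq0I)
  then show ?thesis using Z by blast
qed

lemma rpd_eqI: "k<m \<Longrightarrow> m \<le> length x \<Longrightarrow> nth1 x m < nth1 x k \<Longrightarrow> (\<forall>j. k<j \<and> j<m \<longrightarrow> \<not> nth1 x j < nth1 x k) \<Longrightarrow> rpd x k = m - k"
proof -
  assume a: "k<m" "m \<le> length x" "nth1 x m < nth1 x k" "\<forall>j. k<j \<and> j<m \<longrightarrow> \<not> nth1 x j < nth1 x k"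
  have "Min {j. k < j \<and> j \<le> length x \<and> nth1 x j < nth1 x k} = m"
    apply (rule Min_eqI)
    using a by (auto intro: finite_subset[of _ "{..length x}"] simp: not_le[symmetric])
  thus ?thesis using a unfolding rpd_def by auto
qed

lemma rpd_eq0I: "(\<forall>j. k<j \<and> j \<le> length x \<longrightarrow> \<not> nth1 x j < nth1 x k) \<Longrightarrow> rpd x k = 0"
  unfolding rpd_def by auto

lemma rpd_char: "(rpd x k = 0 \<and> (\<forall>j. k<j \<and> j \<le> length x \<longrightarrow> \<not> nth1 x j < nth1 x k)) \<or>
  (\<exists>m. k<m \<and> m \<le> length x \<and> nth1 x m < nth1 x k \<and> (\<forall>j. k<j \<and> j<m \<longrightarrow> \<not> nth1 x j < nth1 x k) \<and> rpd x k = m - k)"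
proof (cases "\<exists>j. k < j \<and> j \<le> length x \<and> nth1 x j < nth1 x k")
  case True
  let ?S = "{j. k < j \<and> j \<le> length x \<and> nth1 x j < nth1 x k}"
  have f: "finite ?S" by (rule finite_subset[of _ "{..length x}"]) auto
  have ne: "?S \<noteq> {}" using True by auto
  have "Min ?S \<in> ?S" using Min_in[OF f ne] .
  moreover have "\<forall>j. k<j \<and> j<Min ?S \<longrightarrow> \<not> nth1 x j < nth1 x k"
    using Min_le[OF f] \<open>Min ?S \<in> ?S\<close> by (metis (mono_tags, lifting) leD less_imp_le_nat mem_Collect_eq order.trans)
  ultimately have M0: "Min ?S \<in> ?S" and H: "\<forall>j. k<j \<and> j<Min ?S \<longrightarrow> \<not> nth1 x j < nth1 x k" by blast+
  from M0 have M: "k < Min ?S" "Min ?S \<le> length x" "nth1 x (Min ?S) < nth1 x k" by (simp_all only: mem_Collect_eq)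
  have E: "rpd x k = Min ?S - k" using M(1) M(2) M(3) H by (rule rpd_eqI)
  show ?thesis
    by (rule disjI2, rule exI[of _ "Min ?S"], intro conjI) (fact M(1), fact M(2), fact M(3), fact H, fact E)
next
  case False
  then have Z: "\<forall>j. k<j \<and> j \<le> length x \<longrightarrow> \<not> nth1 x j < nth1 x k" by blast
  have "rpd x k = 0" using Z by (rule rpd_eq0I)
  then show ?thesis using Z by blast
qed

lemma fpd_inc:
  assumes a: "1\<le>i" "i+1<j" "j \<le> length x" "nth1 x i < nth1 x (i+1)"
  shows "fpd (tau x i) j = fpd x j \<or> fpd (tau x i) j + 1 = fpd x j"
proof -
  define y where "y = tau x i"
  have Y: "\<And>k. 1\<le>k \<Longrightarrow> k\<le>length x \<Longrightarrow> nth1 y k = (if k = i then nth1 x (i+1) else if k = i+1 then nth1 x i else nth1 x k)"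
    unfolding y_def using a by (intro ny) auto
  have yj: "nth1 y j = nth1 x j" using Y[of j] a by auto
  from fpd_char[of x j] have "fpd y j = fpd x j \<or> fpd y j + 1 = fpd x j"
  proof (elim disjE exE conjE)
    assume f0: "fpd x j = 0" and h: "\<forall>k. 1\<le>k \<and> k<j \<longrightarrow> \<not> nth1 x k < nth1 x j"
    have "fpd y j = 0"
    proof (rule fpd_eq0I, intro allI impI)
      fix k assume k: "1\<le>k \<and> k<j"
      show "\<not> nth1 y k < nth1 y j"
        using h[rule_format, of k] h[rule_format, of i] h[rule_format, of "i+1"] Y[of k] yj a k by auto
    qed
    then show ?thesis using f0 by simp
  next
    fix m assume m: "1\<le>m" "m<j" "nth1 x m < nth1 x j" "\<forall>k. m<k \<and> k<j \<longrightarrow> \<not> nth1 x k < nth1 x j" "fpd x j = j - m"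
    show ?thesis
    proof (cases "m = i")
      case True
      have "fpd y j = j - (i+1)"
      proof (rule fpd_eqI)
        show "nth1 y (i+1) < nth1 y j" using Y[of "i+1"] yj a m True by auto
        show "\<forall>k. i+1<k \<and> k<j \<longrightarrow> \<not> nth1 y k < nth1 y j"
        proof (intro allI impI)
          fix k assume k: "i+1<k \<and> k<j"
          show "\<not> nth1 y k < nth1 y j" using m(4)[rule_format, of k] Y[of k] yj a k True by auto
        qed
      qed (use a in auto)
      then show ?thesis using m(5) True a(2) by arith
    next
      case False
      have "fpd y j = j - m"
      proof (rule fpd_eqI)
        show "nth1 y m < nth1 y j" using Y[of m] yj a m False by auto
        show "\<forall>k. m<k \<and> k<j \<longrightarrow> \<not> nth1 y k < nth1 y j"
        proof (intro allI impI)
          fix k assume k: "m<k \<and> k<j"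
          show "\<not> nth1 y k < nth1 y j"
            using m(4)[rule_format, of k] m(4)[rule_format, of i] m(4)[rule_format, of "i+1"] Y[of k] yj a k False m(1) by auto
        qed
      qed (use m in auto)
      then show ?thesis using m by simp
    qed
  qed
  then show ?thesis unfolding y_def .
qed

lemma fpd_dec:
  assumes a: "1\<le>i" "i+1<j" "j \<le> length x" "nth1 x i > nth1 x (i+1)"
  shows "fpd (tau x i) j = fpd x j \<or> fpd (tau x i) j = fpd x j + 1"
proof -
  define y where "y = tau x i"
  have Y: "\<And>k. 1\<le>k \<Longrightarrow> k\<le>length x \<Longrightarrow> nth1 y k = (if k = i then nth1 x (i+1) else if k = i+1 then nth1 x i else nth1 x k)"
    unfolding y_def using a by (intro ny) auto
  have yj: "nth1 y j = nth1 x j" using Y[of j] a by auto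
  from fpd_char[of x j] have "fpd y j = fpd x j \<or> fpd y j = fpd x j + 1"
  proof (elim disjE exE conjE)
    assume f0: "fpd x j = 0" and h: "\<forall>k. 1\<le>k \<and> k<j \<longrightarrow> \<not> nth1 x k < nth1 x j"
    have "fpd y j = 0"
    proof (rule fpd_eq0I, intro allI impI)
      fix k assume k: "1\<le>k \<and> k<j"
      show "\<not> nth1 y k < nth1 y j"
        using h[rule_format, of k] h[rule_format, of i] h[rule_format, of "i+1"] Y[of k] yj a k by auto
    qed
    then show ?thesis using f0 by simp
  next
    fix m assume m: "1\<le>m" "m<j" "nth1 x m < nth1 x j" "\<forall>k. m<k \<and> k<j \<longrightarrow> \<not> nth1 x k < nth1 x j" "fpd x j = j - m"
    show ?thesis
    proof (cases "m = i+1 \<and> \<not> nth1 x i < nth1 x j")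
      case True
      have "fpd y j = j - i"
      proof (rule fpd_eqI)
        show "nth1 y i < nth1 y j" using Y[of i] yj a m True by auto
        show "\<forall>k. i<k \<and> k<j \<longrightarrow> \<not> nth1 y k < nth1 y j"
        proof (intro allI impI)
          fix k assume k: "i<k \<and> k<j"
          show "\<not> nth1 y k < nth1 y j" using m(4)[rule_format, of k] Y[of k] yj a k True by auto
        qed
      qed (use a in auto)
      then show ?thesis using m(5) True a(2) by arith
    next
      case False
      have "fpd y j = j - m"
      proof (rule fpd_eqI)
        show "nth1 y m < nth1 y j" using Y[of m] yj a m False by auto
        show "\<forall>k. m<k \<and> k<j \<longrightarrow> \<not> nth1 y k < nth1 y j"
        proof (intro allI impI)
          fix k assume k: "m<k \<and> k<j"
          show "\<not> nth1 y k < nth1 y j"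
            using m(4)[rule_format, of k] m(4)[rule_format, of i] m(4)[rule_format, of "i+1"] Y[of k] yj a k False m(1) m(3) by auto
        qed
      qed (use m in auto)
      then show ?thesis using m by simp
    qed
  qed
  then show ?thesis unfolding y_def .
qed

lemma rpd_inc:
  assumes a: "1\<le>j" "j<i" "i < length x" "nth1 x i < nth1 x (i+1)"
  shows "rpd (tau x i) j = rpd x j \<or> rpd (tau x i) j = rpd x j + 1"
proof -
  define y where "y = tau x i"
  have Y: "\<And>k. 1\<le>k \<Longrightarrow> k\<le>length x \<Longrightarrow> nth1 y k = (if k = i then nth1 x (i+1) else if k = i+1 then nth1 x i else nth1 x k)"
    unfolding y_def using a by (intro ny) auto
  have ly: "length y = length x" unfolding y_def tau_def by simp
  have yj: "nth1 y j = nth1 x j" using Y[of j] a by auto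
  from rpd_char[of x j] have "rpd y j = rpd x j \<or> rpd y j = rpd x j + 1"
  proof (elim disjE exE conjE)
    assume f0: "rpd x j = 0" and h: "\<forall>k. j<k \<and> k \<le> length x \<longrightarrow> \<not> nth1 x k < nth1 x j"
    have "rpd y j = 0"
    proof (rule rpd_eq0I, intro allI impI)
      fix k assume k: "j<k \<and> k \<le> length y"
      show "\<not> nth1 y k < nth1 y j"
        using h[rule_format, of k] h[rule_format, of i] h[rule_format, of "i+1"] Y[of k] yj a k ly by auto
    qed
    then show ?thesis using f0 by simp
  next
    fix m assume m: "j<m" "m \<le> length x" "nth1 x m < nth1 x j" "\<forall>k. j<k \<and> k<m \<longrightarrow> \<not> nth1 x k < nth1 x j" "rpd x j = m - j"
    show ?thesis
    proof (cases "m = i \<and> \<not> nth1 x (i+1) < nth1 x j")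
      case True
      have "rpd y j = i + 1 - j"
      proof (rule rpd_eqI)
        show "nth1 y (i+1) < nth1 y j" using Y[of "i+1"] yj a m True by auto
        show "\<forall>k. j<k \<and> k<i+1 \<longrightarrow> \<not> nth1 y k < nth1 y j"
        proof (intro allI impI)
          fix k assume k: "j<k \<and> k<i+1"
          show "\<not> nth1 y k < nth1 y j" using m(4)[rule_format, of k] Y[of k] yj a k True by auto
        qed
      qed (use a ly in auto)
      then show ?thesis using m(5) True a(2) by arith
    next
      case False
      have "rpd y j = m - j"
      proof (rule rpd_eqI)
        show "nth1 y m < nth1 y j" using Y[of m] yj a m False m(4)[rule_format, of i] by auto
        show "\<forall>k. j<k \<and> k<m \<longrightarrow> \<not> nth1 y k < nth1 y j"
        proof (intro allI impI)
          fix k assume k: "j<k \<and> k<m"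
          show "\<not> nth1 y k < nth1 y j"
            using m(4)[rule_format, of k] m(4)[rule_format, of i] m(4)[rule_format, of "i+1"] Y[of k] yj a k False m(2) m(3) by auto
        qed
      qed (use m ly in auto)
      then show ?thesis using m by simp
    qed
  qed
  then show ?thesis unfolding y_def .
qed

lemma rpd_dec:
  assumes a: "1\<le>j" "j<i" "i < length x" "nth1 x i > nth1 x (i+1)"
  shows "rpd (tau x i) j = rpd x j \<or> rpd (tau x i) j + 1 = rpd x j"
proof -
  define y where "y = tau x i"
  have Y: "\<And>k. 1\<le>k \<Longrightarrow> k\<le>length x \<Longrightarrow> nth1 y k = (if k = i then nth1 x (i+1) else if k = i+1 then nth1 x i else nth1 x k)"
    unfolding y_def using a by (intro ny) auto
  have ly: "length y = length x" unfolding y_def tau_def by simp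
  have yj: "nth1 y j = nth1 x j" using Y[of j] a by auto
  from rpd_char[of x j] have "rpd y j = rpd x j \<or> rpd y j + 1 = rpd x j"
  proof (elim disjE exE conjE)
    assume f0: "rpd x j = 0" and h: "\<forall>k. j<k \<and> k \<le> length x \<longrightarrow> \<not> nth1 x k < nth1 x j"
    have "rpd y j = 0"
    proof (rule rpd_eq0I, intro allI impI)
      fix k assume k: "j<k \<and> k \<le> length y"
      show "\<not> nth1 y k < nth1 y j"
        using h[rule_format, of k] h[rule_format, of i] h[rule_format, of "i+1"] Y[of k] yj a k ly by auto
    qed
    then show ?thesis using f0 by simp
  next
    fix m assume m: "j<m" "m \<le> length x" "nth1 x m < nth1 x j" "\<forall>k. j<k \<and> k<m \<longrightarrow> \<not> nth1 x k < nth1 x j" "rpd x j = m - j"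
    show ?thesis
    proof (cases "m = i+1")
      case True
      have "rpd y j = i - j"
      proof (rule rpd_eqI)
        show "nth1 y i < nth1 y j" using Y[of i] yj a m True by auto
        show "\<forall>k. j<k \<and> k<i \<longrightarrow> \<not> nth1 y k < nth1 y j"
        proof (intro allI impI)
          fix k assume k: "j<k \<and> k<i"
          show "\<not> nth1 y k < nth1 y j" using m(4)[rule_format, of k] Y[of k] yj a k True by auto
        qed
      qed (use a ly in auto)
      then show ?thesis using m(5) True a(2) by arith
    next
      case False
      have "rpd y j = m - j"
      proof (rule rpd_eqI)
        show "nth1 y m < nth1 y j" using Y[of m] yj a m False by auto
        show "\<forall>k. j<k \<and> k<m \<longrightarrow> \<not> nth1 y k < nth1 y j"
        proof (intro allI impI)
          fix k assume k: "j<k \<and> k<m"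
          show "\<not> nth1 y k < nth1 y j"
            using m(4)[rule_format, of k] m(4)[rule_format, of i] m(4)[rule_format, of "i+1"] Y[of k] yj a k False m(2) m(3) by auto
        qed
      qed (use m ly in auto)
      then show ?thesis using m by simp
    qed
  qed
  then show ?thesis unfolding y_def .
qed

lemma rpd_le: "rpd x k \<le> length x - k"
  using rpd_char[of x k] by auto

lemma fpd_le: "fpd x k \<le> k"
  unfolding fpd_def by auto

theorem lemma5:
  fixes x :: "int list" and i :: nat
  assumes "distinct x"
    and "1 \<le> i" and "i \<le> length x - 1"
  defines "y \<equiv> tau x i"
    and "R \<equiv> {i + 2 .. i + rr x i - 1}"
    and "L \<equiv> {int i - int (ll x i) + 1 .. int i - 1}"
  shows "(nth1 x i < nth1 x (i+1) \<longrightarrow>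
            (\<forall>j\<in>R. int (fpd y j) \<in> {int (fpd x j), int (fpd x j) - 1}) \<and>
            (\<forall>j. j \<in> L \<longrightarrow> int (rpd y (nat j)) \<in> {int (rpd x (nat j)), int (rpd x (nat j)) + 1}))
       \<and> (nth1 x i > nth1 x (i+1) \<longrightarrow>
            (\<forall>j\<in>R. int (fpd y j) \<in> {int (fpd x j), int (fpd x j) + 1}) \<and>
            (\<forall>j. j \<in> L \<longrightarrow> int (rpd y (nat j)) \<in> {int (rpd x (nat j)), int (rpd x (nat j)) - 1}))"
proof -
  have n: "i < length x" using assms(2,3) by arith
  have rrb: "rr x i \<le> length x - i + 1"
    using rpd_le[of x i] rpd_le[of x "i+1"] n unfolding rr_def by auto
  have Rb: "\<And>j. j\<in>R \<Longrightarrow> i+1 < j \<and> j \<le> length x"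
    using rrb n unfolding R_def by auto
  have llb: "ll x i \<le> i"
    using fpd_le[of x i] fpd_le[of x "i+1"] unfolding ll_def by auto
  have Lb: "\<And>j. j\<in>L \<Longrightarrow> 1 \<le> nat j \<and> nat j < i"
    using llb unfolding L_def by auto
  show ?thesis
  proof (intro conjI impI ballI allI)
    fix j assume "nth1 x i < nth1 x (i+1)" "j \<in> R"
    then show "int (fpd y j) \<in> {int (fpd x j), int (fpd x j) - 1}"
      using fpd_inc[of i j x] Rb[of j] assms(2) unfolding y_def by auto
  next
    fix j assume "nth1 x i < nth1 x (i+1)" "j \<in> L"
    then show "int (rpd y (nat j)) \<in> {int (rpd x (nat j)), int (rpd x (nat j)) + 1}"
      using rpd_inc[of "nat j" i x] Lb[of j] n unfolding y_def by auto
  next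
    fix j assume "nth1 x i > nth1 x (i+1)" "j \<in> R"
    then show "int (fpd y j) \<in> {int (fpd x j), int (fpd x j) + 1}"
      using fpd_dec[of i j x] Rb[of j] assms(2) unfolding y_def by auto
  next
    fix j assume "nth1 x i > nth1 x (i+1)" "j \<in> L"
    then show "int (rpd y (nat j)) \<in> {int (rpd x (nat j)), int (rpd x (nat j)) - 1}"
      using rpd_dec[of "nat j" i x] Lb[of j] n unfolding y_def by auto
  qed
qed

end
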